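(* Let $h$ be the histogram of a distribution and let $S$ be a faithful set of $n$ samples from it. For each integer $1\le j<\log^2 n$, let $S_j$ be the multiset of true probabilities of the domain elements occurring exactly $j$ times in $S$, and let $\sigma_j$ be the sum over $S_j$ (with multiplicity) of each element's distance from a median of $S_j$. Then $$\sum_{1\le j<\log^2 n}\big|\sigma_j-dev_{j,n}(h,m_{h,j,n})\big|=O(\log^{-2}n),$$ where the implicit constant does not depend on $h$ or $S$.
   Context: $\log$ is natural; $poi(\lambda,j)=e^{-\lambda}\lambda^j/j!$. The histogram $h$ gives the number $h(x)$ of domain elements of probability $x$. Faithful: with buckets as follows—for an integer $k\ge0$, bucket $k$ consists of histogram entries with probabilities in $(\frac{k}{n\log^2n},\frac{k+1}{n\log^2n}]$, $B_{poi}(j,k)=\sum_{x \text{ in bucket }k, h(x)\neq0}h(x)poi(nx,j)$, and $B_S(j,k)$ is the number of domain elements in bucket $k$ seen exactly $j$ times in $S$—a set $S$ of $n$ samples is faithful if (1) each domain element of probability $x$ appears $j$ times with $|nx-j|<\max\{\log^{1.5}n,\sqrt{nx\log^{1.5}n}\}$, and (2) for each $j<\log^2n$ and each $k$, $|B_{poi}(j,k)-B_S(j,k)|<n^{0.6}$. Poisson-weighted median: let $S_h$ be the multiset containing $h(x)$ copies of each probability $x$; weight each element $x$ of $S_h$ by $poi(nx,j)$; $m_{h,j,n}$ is a median of this weighted multiset, i.e. a number $m$ such that at most half the total weight lies on numbers greater than $m$ and at most half on numbers less than $m$. For a real $m$, $dev_{j,n}(h,m)=\sum_{x:h(x)\neq0}|x-m|\,h(x)\,poi(nx,j)$.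 *)

theory Defs
  imports "HOL-Analysis.Analysis" "HOL-Library.Multiset"
begin

definition poi :: "real \<Rightarrow> nat \<Rightarrow> real" where
  "poi lam j = exp (- lam) * lam ^ j / fact j"

definition is_distribution :: "nat set \<Rightarrow> (nat \<Rightarrow> real) \<Rightarrow> bool" where
  "is_distribution D p \<longleftrightarrow> finite D \<and> (\<forall>a\<in>D. p a > 0) \<and> (\<Sum>a\<in>D. p a) = 1"

definition hist :: "nat set \<Rightarrow> (nat \<Rightarrow> real) \<Rightarrow> real \<Rightarrow> nat" where
  "hist D p x = card {a\<in>D. p a = x}"

definition in_bucket :: "nat \<Rightarrow> nat \<Rightarrow> real \<Rightarrow> bool" where
  "in_bucket n k x \<longleftrightarrow>
     real k / (real n * (ln (real n))\<^sup>2) < x \<and> x \<le> (real k + 1) / (real n * (ln (real n))\<^sup>2)"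

definition B_poi :: "(real \<Rightarrow> nat) \<Rightarrow> nat \<Rightarrow> nat \<Rightarrow> nat \<Rightarrow> real" where
  "B_poi h n j k = (\<Sum>x\<in>{x. in_bucket n k x \<and> h x \<noteq> 0}. real (h x) * poi (real n * x) j)"

definition B_S :: "nat set \<Rightarrow> (nat \<Rightarrow> real) \<Rightarrow> nat list \<Rightarrow> nat \<Rightarrow> nat \<Rightarrow> nat \<Rightarrow> nat" where
  "B_S D p S n j k = card {a\<in>D. in_bucket n k (p a) \<and> count (mset S) a = j}"

definition faithful :: "nat set \<Rightarrow> (nat \<Rightarrow> real) \<Rightarrow> nat \<Rightarrow> nat list \<Rightarrow> bool" where
  "faithful D p n S \<longleftrightarrow>
     (\<forall>a\<in>D. \<bar>real n * p a - real (count (mset S) a)\<bar>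
              < max ((ln (real n)) powr 1.5) (sqrt (real n * p a * (ln (real n)) powr 1.5))) \<and>
     (\<forall>j k. real j < (ln (real n))\<^sup>2 \<longrightarrow>
              \<bar>B_poi (hist D p) n j k - real (B_S D p S n j k)\<bar> < real n powr 0.6)"

text \<open>Poisson-weighted median of the multiset S_h (h(x) copies of each x, weight poi(nx,j)).\<close>
definition pw_median :: "(real \<Rightarrow> nat) \<Rightarrow> nat \<Rightarrow> nat \<Rightarrow> real \<Rightarrow> bool" where
  "pw_median h j n m \<longleftrightarrow>
     (let W = (\<Sum>x\<in>{x. h x \<noteq> 0}. real (h x) * poi (real n * x) j) in
       (\<Sum>x\<in>{x. h x \<noteq> 0 \<and> x > m}. real (h x) * poi (real n * x) j) \<le> W / 2 \<and>
       (\<Sum>x\<in>{x. h x \<noteq> 0 \<and> x < m}. real (h x) * poi (real n * x) j) \<le> W / 2)"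

definition dev :: "nat \<Rightarrow> nat \<Rightarrow> (real \<Rightarrow> nat) \<Rightarrow> real \<Rightarrow> real" where
  "dev j n h m = (\<Sum>x\<in>{x. h x \<noteq> 0}. \<bar>x - m\<bar> * real (h x) * poi (real n * x) j)"

definition ms_median :: "real multiset \<Rightarrow> real \<Rightarrow> bool" where
  "ms_median M m \<longleftrightarrow>
     real (size (filter_mset (\<lambda>x. x > m) M)) \<le> real (size M) / 2 \<and>
     real (size (filter_mset (\<lambda>x. x < m) M)) \<le> real (size M) / 2"

definition S_j :: "nat set \<Rightarrow> (nat \<Rightarrow> real) \<Rightarrow> nat list \<Rightarrow> nat \<Rightarrow> real multiset" where
  "S_j D p S j = image_mset p (filter_mset (\<lambda>a. count (mset S) a = j) (mset_set D))"

definition sigma_j :: "real multiset \<Rightarrow> real \<Rightarrow> real" where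
  "sigma_j M m = sum_mset (image_mset (\<lambda>x. \<bar>x - m\<bar>) M)"

end

theory Submission
  imports Defs "HOL-Real_Asymp.Real_Asymp"
begin

lemma exp_partial_le:
  fixes y :: real assumes "0 \<le> y" and "finite I"
  shows "(\<Sum>i\<in>I. y ^ i / fact i) \<le> exp y"
proof -
  have "(\<Sum>i\<in>I. y ^ i / fact i) \<le> (\<Sum>i. y ^ i / fact i)"
    apply (rule sum_le_suminf)
    using summable_exp_generic[of y] assms by (auto simp: divide_inverse mult.commute)
  also have "\<dots> = exp y" using exp_converges[of y] sums_unique
    by (metis (no_types, lifting) divide_inverse mult.commute real_scaleR_def sums_cong)
  finally show ?thesis .
qed

lemma term_le_exp:
  fixes y :: real assumes "0 \<le> y"
  shows "y ^ j / fact j \<le> exp y"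
  using exp_partial_le[OF assms, of "{j}"] by simp

lemma poi_nonneg: "0 \<le> lam \<Longrightarrow> 0 \<le> poi lam j"
  by (simp add: poi_def)

lemma poi_tail:
  assumes "0 \<le> lam" shows "poi lam j \<le> exp (real j - lam / 2)"
proof -
  have "lam ^ j / fact j = 2 ^ j * ((lam/2) ^ j / fact j)"
    by (simp add: power_divide)
  also have "\<dots> \<le> 2 ^ j * exp (lam/2)"
    using term_le_exp[of "lam/2" j] assms by (intro mult_left_mono) auto
  also have "(2::real) ^ j \<le> exp (real j)"
  proof -
    have "(2::real) ^ j \<le> exp 1 ^ j" using exp_ge_add_one_self[of 1]
      by (intro power_mono) auto
    thus ?thesis by (simp add: exp_of_nat_mult[symmetric])
  qed
  hence "2 ^ j * exp (lam/2) \<le> exp (real j) * exp (lam/2)" by (intro mult_right_mono) auto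
  finally have "lam ^ j / fact j \<le> exp (real j) * exp (lam / 2)" .
  hence "exp (-lam) * (lam ^ j / fact j) \<le> exp (-lam) * (exp (real j) * exp (lam / 2))"
    by (intro mult_left_mono) auto
  also have "\<dots> = exp (real j - lam/2)" by (simp add: exp_add[symmetric] exp_diff)
  finally show ?thesis by (simp add: poi_def)
qed

lemma poi_sum_le:
  assumes "0 \<le> lam" "finite J" "\<forall>j\<in>J. 1 \<le> j"
  shows "(\<Sum>j\<in>J. poi lam j) \<le> lam"
proof -
  have "(\<Sum>j\<in>J. poi lam j) = (\<Sum>j\<in>J. lam * (exp (-lam) * lam ^ (j-1) / fact j))"
    using assms by (intro sum.cong) (auto simp: poi_def power_eq_if)
  also have "\<dots> \<le> (\<Sum>j\<in>J. lam * (exp (-lam) * (lam ^ (j-1) / fact (j-1))))"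
    using assms
    by (intro sum_mono mult_left_mono) (auto intro!: divide_left_mono fact_mono simp: mult_pos_pos)
  also have "\<dots> = lam * exp (-lam) * (\<Sum>i\<in>(\<lambda>j. j - 1) ` J. lam ^ i / fact i)"
    using assms
  proof -
    have "inj_on (\<lambda>j. j - 1) J" using assms unfolding inj_on_def
      by (metis One_nat_def diff_Suc_1 Suc_pred not_one_le_zero neq0_conv)
    thus ?thesis by (subst sum.reindex) (auto simp: sum_distrib_left mult.assoc)
  qed
  also have "\<dots> \<le> lam * exp (-lam) * exp lam"
    using assms by (intro mult_left_mono exp_partial_le) auto
  also have "\<dots> = lam" by (simp add: exp_minus field_simps)
  finally show ?thesis .
qed

lemma hist_sum:
  assumes "finite D"
  shows "(\<Sum>x\<in>{x. P x \<and> hist D p x \<noteq> 0}. real (hist D p x) * f x) = (\<Sum>a\<in>{a\<in>D. P (p a)}. f (p a))"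
proof -
  let ?A = "{a\<in>D. P (p a)}"
  have fA: "finite ?A" using assms by auto
  have "(\<Sum>a\<in>?A. f (p a)) = (\<Sum>y\<in>p ` ?A. \<Sum>a\<in>{a. a \<in> ?A \<and> p a = y}. f (p a))"
    by (rule sum.image_gen[OF fA])
  also have "\<dots> = (\<Sum>y\<in>p ` ?A. real (hist D p y) * f y)"
  proof (rule sum.cong[OF refl])
    fix y assume "y \<in> p ` ?A"
    then have "P y" by auto
    hence "{a. a \<in> ?A \<and> p a = y} = {a\<in>D. p a = y}" by auto
    thus "(\<Sum>a\<in>{a. a \<in> ?A \<and> p a = y}. f (p a)) = real (hist D p y) * f y"
      by (simp add: hist_def)
  qed
  also have "p ` ?A = {x. P x \<and> hist D p x \<noteq> 0}"
  proof -
    have "hist D p x \<noteq> 0 \<longleftrightarrow> (\<exists>a\<in>D. p a = x)" for x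
      using assms by (auto simp: hist_def card_eq_0_iff)
    thus ?thesis by auto
  qed
  finally show ?thesis by simp
qed

lemma wmedian_min:
  fixes wt v :: "'a \<Rightarrow> real"
  assumes fA: "finite A" and nn: "\<forall>a\<in>A. 0 \<le> wt a"
    and gt: "(\<Sum>a\<in>{a\<in>A. v a > m}. wt a) \<le> (\<Sum>a\<in>A. wt a) / 2"
    and lt: "(\<Sum>a\<in>{a\<in>A. v a < m}. wt a) \<le> (\<Sum>a\<in>A. wt a) / 2"
  shows "(\<Sum>a\<in>A. wt a * \<bar>v a - m\<bar>) \<le> (\<Sum>a\<in>A. wt a * \<bar>v a - t\<bar>)"
proof (cases "m \<le> t")
  case True
  define s where "s a = (if v a > m then -1 else (1::real))" for a
  have split: "(\<Sum>a\<in>A. wt a * s a) = (\<Sum>a\<in>A. wt a) - 2 * (\<Sum>a\<in>{a\<in>A. v a > m}. wt a)"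
  proof -
    have "(\<Sum>a\<in>A. wt a * s a) = (\<Sum>a\<in>A. wt a) - (\<Sum>a\<in>A. if v a > m then 2 * wt a else 0)"
      by (auto simp: s_def sum_subtractf[symmetric] intro!: sum.cong)
    also have "(\<Sum>a\<in>A. if v a > m then 2 * wt a else 0) = 2 * (\<Sum>a\<in>{a\<in>A. v a > m}. wt a)"
      using fA by (simp add: sum.If_cases sum_distrib_left Int_def)
    finally show ?thesis .
  qed
  have "(\<Sum>a\<in>A. wt a * \<bar>v a - m\<bar>) + (t - m) * (\<Sum>a\<in>A. wt a * s a)
        = (\<Sum>a\<in>A. wt a * (\<bar>v a - m\<bar> + (t - m) * s a))"
    by (simp add: sum_distrib_left sum.distrib[symmetric] algebra_simps)
  also have "\<dots> \<le> (\<Sum>a\<in>A. wt a * \<bar>v a - t\<bar>)"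
    using nn True by (intro sum_mono mult_left_mono) (auto simp: s_def abs_if)
  finally have "(\<Sum>a\<in>A. wt a * \<bar>v a - m\<bar>) + (t - m) * (\<Sum>a\<in>A. wt a * s a) \<le> (\<Sum>a\<in>A. wt a * \<bar>v a - t\<bar>)" .
  moreover have "0 \<le> (t - m) * (\<Sum>a\<in>A. wt a * s a)"
    using True gt split by (intro mult_nonneg_nonneg) auto
  ultimately show ?thesis by linarith
next
  case False
  define s where "s a = (if v a < m then -1 else (1::real))" for a
  have split: "(\<Sum>a\<in>A. wt a * s a) = (\<Sum>a\<in>A. wt a) - 2 * (\<Sum>a\<in>{a\<in>A. v a < m}. wt a)"
  proof -
    have "(\<Sum>a\<in>A. wt a * s a) = (\<Sum>a\<in>A. wt a) - (\<Sum>a\<in>A. if v a < m then 2 * wt a else 0)"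
      by (auto simp: s_def sum_subtractf[symmetric] intro!: sum.cong)
    also have "(\<Sum>a\<in>A. if v a < m then 2 * wt a else 0) = 2 * (\<Sum>a\<in>{a\<in>A. v a < m}. wt a)"
      using fA by (simp add: sum.If_cases sum_distrib_left Int_def)
    finally show ?thesis .
  qed
  have "(\<Sum>a\<in>A. wt a * \<bar>v a - m\<bar>) + (m - t) * (\<Sum>a\<in>A. wt a * s a)
        = (\<Sum>a\<in>A. wt a * (\<bar>v a - m\<bar> + (m - t) * s a))"
    by (simp add: sum_distrib_left sum.distrib[symmetric] algebra_simps)
  also have "\<dots> \<le> (\<Sum>a\<in>A. wt a * \<bar>v a - t\<bar>)"
    using nn False by (intro sum_mono mult_left_mono) (auto simp: s_def abs_if)
  finally have "(\<Sum>a\<in>A. wt a * \<bar>v a - m\<bar>) + (m - t) * (\<Sum>a\<in>A. wt a * s a) \<le> (\<Sum>a\<in>A. wt a * \<bar>v a - t\<bar>)" .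
  moreover have "0 \<le> (m - t) * (\<Sum>a\<in>A. wt a * s a)"
    using False lt split by (intro mult_nonneg_nonneg) auto
  ultimately show ?thesis by linarith
qed

locale fx =
  fixes n :: nat and D :: "nat set" and p :: "nat \<Rightarrow> real" and S :: "nat list"
  assumes n3: "n \<ge> 3" and dist: "is_distribution D p" and len: "length S = n"
    and sub: "set S \<subseteq> D" and faith: "faithful D p n S"
    and Tsmall: "(4 * ln (real n) ^ 4 + 2) / (real n * (ln (real n))\<^sup>2) \<le> 1"
begin

definition "L = ln (real n)"
definition "w = 1 / (real n * L\<^sup>2)"
definition "M = nat \<lceil>4 * L ^ 4\<rceil>"
definition "T = (real M + 1) * w"
definition "c a = count (mset S) a"
definition "bidx x = nat (\<lceil>x / w\<rceil> - 1)"

lemma finD: "finite D" using dist by (simp add: is_distribution_def)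
lemma ppos: "a \<in> D \<Longrightarrow> p a > 0" using dist by (simp add: is_distribution_def)
lemma psum: "(\<Sum>a\<in>D. p a) = 1" using dist by (simp add: is_distribution_def)
lemma ple1: "a \<in> D \<Longrightarrow> p a \<le> 1"
proof -
  assume a: "a \<in> D"
  have "(\<Sum>b\<in>{a}. p b) \<le> (\<Sum>b\<in>D. p b)"
    using a finD ppos by (intro sum_mono2) (auto intro: less_imp_le)
  thus ?thesis using psum by simp
qed

lemma L1: "L \<ge> 1"
proof -
  have "exp 1 \<le> (3::real)" using exp_le by simp
  also have "\<dots> \<le> real n" using n3 by simp
  finally show ?thesis unfolding L_def using n3 by (simp add: ln_ge_iff)
qed

lemma npos: "real n > 0" using n3 by simp
lemma wpos: "w > 0" unfolding w_def using L1 npos by simp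

lemma M_bounds: "4 * L ^ 4 \<le> real M" "real M \<le> 4 * L ^ 4 + 1"
  unfolding M_def using L1 by (auto simp: of_nat_nat)

lemma T_lower: "4 * L\<^sup>2 / real n \<le> T"
proof -
  have "4 * L\<^sup>2 / real n = (4 * L ^ 4) * w" unfolding w_def using L1 npos
    by (simp add: field_simps power2_eq_square power4_eq_xxxx)
  also have "\<dots> \<le> (real M + 1) * w" using M_bounds wpos by (intro mult_right_mono) auto
  finally show ?thesis unfolding T_def .
qed

lemma T_upper: "T \<le> (4 * L ^ 4 + 2) * w"
  unfolding T_def using M_bounds wpos by (intro mult_right_mono) auto

lemma T_le1: "T \<le> 1"
proof -
  have "(4 * L ^ 4 + 2) * w = (4 * ln (real n) ^ 4 + 2) / (real n * (ln (real n))\<^sup>2)"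
    unfolding w_def L_def by simp
  thus ?thesis using T_upper Tsmall by linarith
qed

lemma Tpos: "T > 0" unfolding T_def using wpos by simp

lemma in_bucket_iff: "x > 0 \<Longrightarrow> in_bucket n k x \<longleftrightarrow> k = bidx x"
proof -
  assume x: "x > 0"
  have e: "real k / (real n * (ln (real n))\<^sup>2) = real k * w" "(real k + 1) / (real n * (ln (real n))\<^sup>2) = (real k + 1) * w"
    unfolding w_def L_def by simp_all
  have "in_bucket n k x \<longleftrightarrow> real k < x / w \<and> x / w \<le> real k + 1"
    unfolding in_bucket_def e using wpos by (simp add: field_simps)
  also have "\<dots> \<longleftrightarrow> \<lceil>x / w\<rceil> = int k + 1"
    by (simp add: ceiling_eq_iff)
  also have "\<dots> \<longleftrightarrow> k = bidx x"
  proof -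
    have "\<lceil>x / w\<rceil> \<ge> 1" using x wpos by simp
    thus ?thesis unfolding bidx_def by auto
  qed
  finally show ?thesis .
qed

lemma bidx_le: "0 < x \<Longrightarrow> x \<le> T \<Longrightarrow> bidx x \<le> M"
proof -
  assume x: "0 < x" "x \<le> T"
  have "x / w \<le> real M + 1" using x wpos unfolding T_def by (simp add: field_simps)
  hence "\<lceil>x / w\<rceil> \<le> int M + 1" by (simp add: ceiling_le_iff)
  thus ?thesis unfolding bidx_def by simp
qed

lemma bucket_range: "0 < x \<Longrightarrow> real (bidx x) * w < x \<and> x \<le> (real (bidx x) + 1) * w"
proof -
  assume x: "0 < x"
  have "in_bucket n (bidx x) x" using in_bucket_iff[OF x] by simp
  moreover have "real k / (real n * (ln (real n))\<^sup>2) = real k * w" "(real k + 1) / (real n * (ln (real n))\<^sup>2) = (real k + 1) * w" for k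
    unfolding w_def L_def by simp_all
  ultimately show ?thesis unfolding in_bucket_def by auto
qed

lemma bucket_close: "0 < x \<Longrightarrow> \<bar>x - (real (bidx x) + 1) * w\<bar> \<le> w"
  using bucket_range[of x] by (auto simp: algebra_simps)

lemma bucket_le_T: "0 < x \<Longrightarrow> bidx x \<le> M \<Longrightarrow> x \<le> T"
proof -
  assume x: "0 < x" "bidx x \<le> M"
  have "x \<le> (real (bidx x) + 1) * w" using bucket_range[OF x(1)] by simp
  also have "\<dots> \<le> T" unfolding T_def using x wpos by (intro mult_right_mono) auto
  finally show ?thesis .
qed


lemma faith1: "a \<in> D \<Longrightarrow> \<bar>real n * p a - real (c a)\<bar> < max (L powr 1.5) (sqrt (real n * p a * L powr 1.5))"
  using faith unfolding faithful_def c_def L_def by blast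

lemma faith2: "real j < L\<^sup>2 \<Longrightarrow> \<bar>B_poi (hist D p) n j k - real (B_S D p S n j k)\<bar> < real n powr 0.6"
  using faith unfolding faithful_def L_def by blast

lemma inR: assumes a: "a \<in> D" and cj: "real (c a) < L\<^sup>2" shows "p a \<le> T"
proof (rule ccontr)
  assume "\<not> p a \<le> T"
  hence "p a > T" by simp
  define lam where "lam = real n * p a"
  have "lam > real n * T" unfolding lam_def using npos \<open>p a > T\<close> by simp
  moreover have "real n * T \<ge> 4 * L\<^sup>2" using T_lower npos by (simp add: field_simps)
  ultimately have lam: "lam > 4 * L\<^sup>2" by linarith
  have lam0: "0 \<le> lam" using lam by (smt (verit) zero_le_power2)
  have Lp: "L powr 1.5 \<le> L\<^sup>2"
  proof -
    have "L powr 1.5 \<le> L powr 2" using L1 by (intro powr_mono) auto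
    thus ?thesis using L1 by (simp add: powr_numeral)
  qed
  have sq: "sqrt (lam * L powr 1.5) \<le> lam / 2"
  proof -
    have "lam * L powr 1.5 \<le> lam * (lam / 4)"
      using Lp lam lam0 L1 by (intro mult_left_mono) auto
    also have "\<dots> = (lam/2)\<^sup>2" by (simp add: power2_eq_square)
    finally show ?thesis using lam L1
      by (metis abs_of_nonneg less_eq_real_def order.trans real_sqrt_abs real_sqrt_le_mono
          zero_le_divide_iff zero_le_numeral zero_le_power2 mult_nonneg_nonneg)
  qed
  have "\<bar>lam - real (c a)\<bar> < max (L powr 1.5) (sqrt (lam * L powr 1.5))"
    using faith1[OF a] unfolding lam_def .
  moreover have "lam - real (c a) > 3 * lam / 4" using cj lam by linarith
  moreover have "L powr 1.5 < 3 * lam / 4" using Lp lam L1 zero_le_power2[of L] by linarith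
  moreover have "sqrt (lam * L powr 1.5) < 3 * lam / 4" using sq lam L1 zero_le_power2[of L] by linarith
  ultimately show False by linarith
qed

lemma poi_out: assumes a: "a \<in> D" and pT: "p a > T" and j: "real j < L\<^sup>2"
  shows "poi (real n * p a) j \<le> real n * p a * exp (- (L\<^sup>2))"
proof -
  define lam where "lam = real n * p a"
  have "lam > real n * T" unfolding lam_def using npos pT by simp
  moreover have "real n * T \<ge> 4 * L\<^sup>2" using T_lower npos by (simp add: field_simps)
  ultimately have lam: "lam > 4 * L\<^sup>2" by linarith
  have L2: "L\<^sup>2 \<ge> 1" using L1 by simp
  have "poi lam j \<le> exp (real j - lam / 2)" using lam L2 by (intro poi_tail) auto
  also have "\<dots> \<le> exp (- (L\<^sup>2))" using lam j by simp
  also have "\<dots> \<le> lam * exp (- (L\<^sup>2))" using lam L2 by simp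
  finally show ?thesis unfolding lam_def .
qed

lemma out_sum: assumes j: "real j < L\<^sup>2"
  shows "(\<Sum>a\<in>D - {a. p a \<le> T}. poi (real n * p a) j) \<le> real n * exp (- (L\<^sup>2))"
proof -
  have "(\<Sum>a\<in>D - {a. p a \<le> T}. poi (real n * p a) j) \<le> (\<Sum>a\<in>D - {a. p a \<le> T}. real n * p a * exp (- (L\<^sup>2)))"
    using poi_out j by (intro sum_mono) auto
  also have "\<dots> \<le> (\<Sum>a\<in>D. real n * p a * exp (- (L\<^sup>2)))"
    using finD ppos npos by (intro sum_mono2) (auto intro!: mult_nonneg_nonneg less_imp_le)
  also have "\<dots> = real n * exp (- (L\<^sup>2))" using psum by (simp add: sum_distrib_right[symmetric] sum_distrib_left[symmetric])
  finally show ?thesis .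
qed


definition "A j = {a\<in>D. c a = j}"
definition "F j t = (\<Sum>a\<in>A j. \<bar>p a - t\<bar>)"
definition "G j t = (\<Sum>a\<in>D. poi (real n * p a) j * \<bar>p a - t\<bar>)"
definition "W j = (\<Sum>a\<in>D. poi (real n * p a) j)"
definition "E j = (real M + 1) * real n powr 0.6 * T + w * (real (card (A j)) + W j) + 2 * real n * exp (- (L\<^sup>2))"

lemma finA: "finite (A j)" unfolding A_def using finD by simp

lemma poi_nn: "a \<in> D \<Longrightarrow> 0 \<le> poi (real n * p a) j"
  using ppos npos by (intro poi_nonneg) (auto intro: less_imp_le)

lemma bucket_est:
  fixes a b d X Y nb :: real
  assumes "a * (d - w) \<le> X" "X \<le> a * (d + w)" "b * (d - w) \<le> Y" "Y \<le> b * (d + w)"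
    "\<bar>a - b\<bar> \<le> nb" "0 \<le> d" "d \<le> T"
  shows "\<bar>X - Y\<bar> \<le> nb * T + w * (a + b)"
proof -
  have "\<bar>a - b\<bar> * d \<le> nb * T" using assms by (intro mult_mono) auto
  moreover have "(a - b) * d \<le> \<bar>a - b\<bar> * d" "(b - a) * d \<le> \<bar>a - b\<bar> * d"
    using assms by (auto intro!: mult_right_mono)
  ultimately show ?thesis using assms by (auto simp: algebra_simps abs_le_iff)
qed

lemma key:
  assumes j1: "1 \<le> j" and jL: "real j < L\<^sup>2" and t: "0 \<le> t" "t \<le> T"
  shows "\<bar>F j t - G j t\<bar> \<le> E j"
proof -
  define R where "R = D \<inter> {a. p a \<le> T}"
  have finR: "finite R" unfolding R_def using finD by simp
  have GS: "G j t = (\<Sum>a\<in>R. poi (real n * p a) j * \<bar>p a - t\<bar>) + (\<Sum>a\<in>D - {a. p a \<le> T}. poi (real n * p a) j * \<bar>p a - t\<bar>)"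
    unfolding G_def R_def using finD by (rule sum.Int_Diff)
  define GO where "GO = (\<Sum>a\<in>D - {a. p a \<le> T}. poi (real n * p a) j * \<bar>p a - t\<bar>)"
  have GO0: "0 \<le> GO" unfolding GO_def using poi_nn by (intro sum_nonneg mult_nonneg_nonneg) auto
  have GO1: "GO \<le> real n * exp (- (L\<^sup>2))"
  proof -
    have "GO \<le> (\<Sum>a\<in>D - {a. p a \<le> T}. poi (real n * p a) j)"
      unfolding GO_def
    proof (intro sum_mono)
      fix a assume a: "a \<in> D - {a. p a \<le> T}"
      have "\<bar>p a - t\<bar> \<le> 1" using ppos[of a] ple1[of a] a t T_le1 by auto
      thus "poi (real n * p a) j * \<bar>p a - t\<bar> \<le> poi (real n * p a) j"
        using poi_nn[of a j] a by (simp add: mult_left_le)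
    qed
    also have "\<dots> \<le> real n * exp (- (L\<^sup>2))" by (rule out_sum[OF jL])
    finally show ?thesis .
  qed
  define GR where "GR = (\<Sum>a\<in>R. poi (real n * p a) j * \<bar>p a - t\<bar>)"
  define g where "g a = bidx (p a)" for a
  define Ak where "Ak k = {a. a \<in> A j \<and> g a = k}" for k
  define Rk where "Rk k = {a. a \<in> R \<and> g a = k}" for k
  have AR: "g ` A j \<subseteq> {..M}"
  proof
    fix k assume "k \<in> g ` A j"
    then obtain a where a: "a \<in> D" "c a = j" "k = g a" unfolding A_def by auto
    have "p a \<le> T" using inR[OF a(1)] a jL by simp
    thus "k \<in> {..M}" using a ppos[OF a(1)] bidx_le unfolding g_def by auto
  qed
  have RR: "g ` R \<subseteq> {..M}" using bidx_le ppos unfolding R_def g_def by auto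
  have Fk: "F j t = (\<Sum>k\<le>M. \<Sum>a\<in>Ak k. \<bar>p a - t\<bar>)"
    unfolding F_def Ak_def by (rule sum.group[OF finA _ AR, symmetric]) simp
  have Gk: "GR = (\<Sum>k\<le>M. \<Sum>a\<in>Rk k. poi (real n * p a) j * \<bar>p a - t\<bar>)"
    unfolding GR_def Rk_def by (rule sum.group[OF finR _ RR, symmetric]) simp
  have cardk: "real (card (A j)) = (\<Sum>k\<le>M. real (card (Ak k)))"
  proof -
    have "real (card (A j)) = (\<Sum>a\<in>A j. 1)" by simp
    also have "\<dots> = (\<Sum>k\<le>M. \<Sum>a\<in>Ak k. 1)"
      unfolding Ak_def by (rule sum.group[OF finA _ AR, symmetric]) simp
    finally show ?thesis by simp
  qed
  have Wk: "(\<Sum>a\<in>R. poi (real n * p a) j) = (\<Sum>k\<le>M. \<Sum>a\<in>Rk k. poi (real n * p a) j)"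
    unfolding Rk_def by (rule sum.group[OF finR _ RR, symmetric]) simp
  have WR: "(\<Sum>a\<in>R. poi (real n * p a) j) \<le> W j"
    unfolding W_def R_def using finD poi_nn by (intro sum_mono2) auto
  have per: "\<bar>(\<Sum>a\<in>Ak k. \<bar>p a - t\<bar>) - (\<Sum>a\<in>Rk k. poi (real n * p a) j * \<bar>p a - t\<bar>)\<bar>
      \<le> real n powr 0.6 * T + w * (real (card (Ak k)) + (\<Sum>a\<in>Rk k. poi (real n * p a) j))"
    if k: "k \<le> M" for k
  proof -
    define ck where "ck = (real k + 1) * w"
    define d where "d = \<bar>ck - t\<bar>"
    have ck0: "0 < ck" unfolding ck_def using wpos by simp
    have ckT: "ck \<le> T" unfolding ck_def T_def using k wpos by (intro mult_right_mono) auto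
    have d0: "0 \<le> d" "d \<le> T" unfolding d_def using ck0 ckT t by auto
    have close: "\<bar>p a - ck\<bar> \<le> w" if "a \<in> D" "g a = k" for a
      using bucket_close[OF ppos[OF that(1)]] that unfolding ck_def g_def by simp
    have near: "d - w \<le> \<bar>p a - t\<bar> \<and> \<bar>p a - t\<bar> \<le> d + w" if "a \<in> D" "g a = k" for a
      using close[OF that] unfolding d_def by auto
    have AkD: "Ak k \<subseteq> D" "Rk k \<subseteq> D" unfolding Ak_def Rk_def A_def R_def by auto
    have finAk: "finite (Ak k)" "finite (Rk k)" using AkD finD finite_subset by auto
    have X1: "real (card (Ak k)) * (d - w) \<le> (\<Sum>a\<in>Ak k. \<bar>p a - t\<bar>)"
    proof -
      have "(\<Sum>a\<in>Ak k. d - w) \<le> (\<Sum>a\<in>Ak k. \<bar>p a - t\<bar>)"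
        using near AkD unfolding Ak_def by (intro sum_mono) auto
      thus ?thesis by simp
    qed
    have X2: "(\<Sum>a\<in>Ak k. \<bar>p a - t\<bar>) \<le> real (card (Ak k)) * (d + w)"
    proof -
      have "(\<Sum>a\<in>Ak k. \<bar>p a - t\<bar>) \<le> (\<Sum>a\<in>Ak k. d + w)"
        using near AkD unfolding Ak_def by (intro sum_mono) auto
      thus ?thesis by simp
    qed
    have Y1: "(\<Sum>a\<in>Rk k. poi (real n * p a) j) * (d - w) \<le> (\<Sum>a\<in>Rk k. poi (real n * p a) j * \<bar>p a - t\<bar>)"
      unfolding sum_distrib_right
      using near AkD poi_nn unfolding Rk_def by (intro sum_mono mult_left_mono) auto
    have Y2: "(\<Sum>a\<in>Rk k. poi (real n * p a) j * \<bar>p a - t\<bar>) \<le> (\<Sum>a\<in>Rk k. poi (real n * p a) j) * (d + w)"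
      unfolding sum_distrib_right
      using near AkD poi_nn unfolding Rk_def by (intro sum_mono mult_left_mono) auto
    have BS: "real (B_S D p S n j k) = real (card (Ak k))"
    proof -
      have "{a\<in>D. in_bucket n k (p a) \<and> count (mset S) a = j} = Ak k"
        unfolding Ak_def A_def g_def c_def using in_bucket_iff ppos by auto
      thus ?thesis unfolding B_S_def by simp
    qed
    have BP: "B_poi (hist D p) n j k = (\<Sum>a\<in>Rk k. poi (real n * p a) j)"
    proof -
      have "B_poi (hist D p) n j k = (\<Sum>a\<in>{a\<in>D. in_bucket n k (p a)}. poi (real n * p a) j)"
        unfolding B_poi_def by (rule hist_sum[OF finD])
      also have "{a\<in>D. in_bucket n k (p a)} = Rk k"
      proof -
        have "a \<in> D \<Longrightarrow> g a = k \<Longrightarrow> p a \<le> T" for a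
          using bucket_le_T[OF ppos] k unfolding g_def by auto
        thus ?thesis unfolding Rk_def R_def g_def using in_bucket_iff ppos by auto
      qed
      finally show ?thesis .
    qed
    have diff: "\<bar>real (card (Ak k)) - (\<Sum>a\<in>Rk k. poi (real n * p a) j)\<bar> \<le> real n powr 0.6"
      using faith2[OF jL, of k] BS BP by simp
    show ?thesis by (rule bucket_est[OF X1 X2 Y1 Y2 diff d0])
  qed
  have "\<bar>F j t - GR\<bar> = \<bar>\<Sum>k\<le>M. (\<Sum>a\<in>Ak k. \<bar>p a - t\<bar>) - (\<Sum>a\<in>Rk k. poi (real n * p a) j * \<bar>p a - t\<bar>)\<bar>"
    unfolding Fk Gk by (simp add: sum_subtractf)
  also have "\<dots> \<le> (\<Sum>k\<le>M. \<bar>(\<Sum>a\<in>Ak k. \<bar>p a - t\<bar>) - (\<Sum>a\<in>Rk k. poi (real n * p a) j * \<bar>p a - t\<bar>)\<bar>)"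
    by (rule sum_abs)
  also have "\<dots> \<le> (\<Sum>k\<le>M. real n powr 0.6 * T + w * (real (card (Ak k)) + (\<Sum>a\<in>Rk k. poi (real n * p a) j)))"
    using per by (intro sum_mono) auto
  also have "\<dots> = (real M + 1) * real n powr 0.6 * T + w * (real (card (A j)) + (\<Sum>a\<in>R. poi (real n * p a) j))"
    unfolding cardk Wk by (simp add: sum.distrib sum_distrib_left[symmetric] distrib_left[symmetric])
  also have "\<dots> \<le> (real M + 1) * real n powr 0.6 * T + w * (real (card (A j)) + W j)"
    using WR wpos by (intro add_left_mono mult_left_mono) auto
  finally have "\<bar>F j t - GR\<bar> \<le> (real M + 1) * real n powr 0.6 * T + w * (real (card (A j)) + W j)" .
  moreover have "G j t = GR + GO" using GS unfolding GR_def GO_def .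
  ultimately show ?thesis unfolding E_def using GO0 GO1 npos by auto
qed


lemma Sj_eq: "S_j D p S j = image_mset p (mset_set (A j))"
  unfolding S_j_def A_def c_def using finD by simp

lemma sigma_eq: "sigma_j (S_j D p S j) t = F j t"
  unfolding sigma_j_def Sj_eq F_def by (simp add: sum_unfold_sum_mset multiset.map_comp o_def)

lemma size_filter: "real (size (filter_mset P (S_j D p S j))) = (\<Sum>a\<in>{a\<in>A j. P (p a)}. 1)"
  unfolding Sj_eq filter_mset_image_mset using finA by simp

lemma F_min: assumes "ms_median (S_j D p S j) m" shows "F j m \<le> F j t"
proof -
  have sz: "real (size (S_j D p S j)) = (\<Sum>a\<in>A j. 1)" unfolding Sj_eq by simp
  have "(\<Sum>a\<in>A j. 1 * \<bar>p a - m\<bar>) \<le> (\<Sum>a\<in>A j. 1 * \<bar>p a - t\<bar>)"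
    apply (rule wmedian_min[OF finA])
    using assms unfolding ms_median_def sz size_filter by auto
  thus ?thesis unfolding F_def by simp
qed

lemma hist_sum': "(\<Sum>x\<in>{x. P x \<and> hist D p x \<noteq> 0}. real (hist D p x) * f x) = (\<Sum>a\<in>{a\<in>D. P (p a)}. f (p a))"
  by (rule hist_sum[OF finD])

lemma dev_eq: "dev j n (hist D p) m = G j m"
proof -
  have "dev j n (hist D p) m = (\<Sum>x\<in>{x. True \<and> hist D p x \<noteq> 0}. real (hist D p x) * (poi (real n * x) j * \<bar>x - m\<bar>))"
    unfolding dev_def by (simp add: ac_simps)
  also have "\<dots> = G j m" unfolding hist_sum' G_def by simp
  finally show ?thesis .
qed

lemma G_min: assumes "pw_median (hist D p) j n m" shows "G j m \<le> G j t"
proof -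
  have e1: "(\<Sum>x\<in>{x. hist D p x \<noteq> 0}. real (hist D p x) * poi (real n * x) j) = (\<Sum>a\<in>D. poi (real n * p a) j)"
    using hist_sum'[where P="\<lambda>x. True" and f="\<lambda>x. poi (real n * x) j"] by simp
  have e2: "(\<Sum>x\<in>{x. hist D p x \<noteq> 0 \<and> x > m}. real (hist D p x) * poi (real n * x) j) = (\<Sum>a\<in>{a\<in>D. p a > m}. poi (real n * p a) j)"
    using hist_sum'[where P="\<lambda>x. x > m" and f="\<lambda>x. poi (real n * x) j"] by (simp add: conj_commute)
  have e3: "(\<Sum>x\<in>{x. hist D p x \<noteq> 0 \<and> x < m}. real (hist D p x) * poi (real n * x) j) = (\<Sum>a\<in>{a\<in>D. p a < m}. poi (real n * p a) j)"
    using hist_sum'[where P="\<lambda>x. x < m" and f="\<lambda>x. poi (real n * x) j"] by (simp add: conj_commute)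
  have "(\<Sum>a\<in>D. poi (real n * p a) j * \<bar>p a - m\<bar>) \<le> (\<Sum>a\<in>D. poi (real n * p a) j * \<bar>p a - t\<bar>)"
    apply (rule wmedian_min[OF finD])
    using assms poi_nn unfolding pw_median_def Let_def e1 e2 e3 by auto
  thus ?thesis unfolding G_def .
qed

lemma perj:
  assumes j1: "1 \<le> j" and jL: "real j < L\<^sup>2"
    and pm: "pw_median (hist D p) j n m" and mm: "ms_median (S_j D p S j) mS"
  shows "\<bar>sigma_j (S_j D p S j) mS - dev j n (hist D p) m\<bar> \<le> E j + real n * exp (- (L\<^sup>2))"
proof -
  define t1 where "t1 = max 0 (min m T)"
  define t2 where "t2 = max 0 (min mS T)"
  have t1: "0 \<le> t1" "t1 \<le> T" and t2: "0 \<le> t2" "t2 \<le> T" unfolding t1_def t2_def using Tpos by auto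
  have up1: "F j mS \<le> F j t1" by (rule F_min[OF mm])
  have up2: "G j t1 \<le> G j m + real n * exp (- (L\<^sup>2))"
  proof -
    have pt: "poi (real n * p a) j * \<bar>p a - t1\<bar> \<le> poi (real n * p a) j * \<bar>p a - m\<bar>
              + (if a \<in> D - {a. p a \<le> T} then poi (real n * p a) j else 0)" if a: "a \<in> D" for a
    proof -
      have pa: "0 < p a" "p a \<le> 1" using ppos[OF a] ple1[OF a] by auto
      have P0: "0 \<le> poi (real n * p a) j" using poi_nn[OF a] .
      show ?thesis
      proof (cases "p a \<le> T")
        case True
        hence "\<bar>p a - t1\<bar> \<le> \<bar>p a - m\<bar>" unfolding t1_def using pa by auto
        thus ?thesis using P0 True by (simp add: mult_left_mono)
      next
        case False
        hence "\<bar>p a - t1\<bar> \<le> \<bar>p a - m\<bar> + 1" unfolding t1_def using pa Tpos by auto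
        hence "poi (real n * p a) j * \<bar>p a - t1\<bar> \<le> poi (real n * p a) j * (\<bar>p a - m\<bar> + 1)"
          using P0 by (simp add: mult_left_mono)
        thus ?thesis using False a by (simp add: algebra_simps)
      qed
    qed
    have "G j t1 \<le> (\<Sum>a\<in>D. poi (real n * p a) j * \<bar>p a - m\<bar> + (if a \<in> D - {a. p a \<le> T} then poi (real n * p a) j else 0))"
      unfolding G_def using pt by (intro sum_mono) auto
    also have "\<dots> = G j m + (\<Sum>a\<in>D - {a. p a \<le> T}. poi (real n * p a) j)"
      unfolding G_def sum.distrib using finD by (simp add: sum.If_cases Int_absorb1 Diff_eq Collect_neg_eq)
    also have "\<dots> \<le> G j m + real n * exp (- (L\<^sup>2))" using out_sum[OF jL] by simp
    finally show ?thesis .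
  qed
  have lo1: "G j m \<le> G j t2" by (rule G_min[OF pm])
  have lo2: "F j t2 \<le> F j mS"
    unfolding F_def
  proof (intro sum_mono)
    fix a assume a: "a \<in> A j"
    hence "a \<in> D" "c a = j" unfolding A_def by auto
    hence "0 < p a" "p a \<le> T" using ppos inR jL by auto
    thus "\<bar>p a - t2\<bar> \<le> \<bar>p a - mS\<bar>" unfolding t2_def by auto
  qed
  have k1: "\<bar>F j t1 - G j t1\<bar> \<le> E j" by (rule key[OF j1 jL t1])
  have k2: "\<bar>F j t2 - G j t2\<bar> \<le> E j" by (rule key[OF j1 jL t2])
  have "\<bar>F j mS - G j m\<bar> \<le> E j + real n * exp (- (L\<^sup>2))"
  proof -
    have nn: "0 \<le> real n * exp (- (L\<^sup>2))" by simp
    show ?thesis using up1 up2 lo1 lo2 k1 k2 nn unfolding abs_le_iff by linarith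
  qed
  thus ?thesis unfolding sigma_eq dev_eq .
qed


lemma total:
  assumes pw: "\<forall>j. 1 \<le> j \<and> real j < (ln (real n))\<^sup>2 \<longrightarrow> pw_median (hist D p) j n (m j)"
    and ms: "\<forall>j. 1 \<le> j \<and> real j < (ln (real n))\<^sup>2 \<longrightarrow> ms_median (S_j D p S j) (mS j)"
  shows "(\<Sum>j\<in>{j. 1 \<le> j \<and> real j < (ln (real n))\<^sup>2}.
        \<bar>sigma_j (S_j D p S j) (mS j) - dev j n (hist D p) (m j)\<bar>)
      \<le> 2 / L\<^sup>2 + (L\<^sup>2 + 1) * ((real M + 1) * real n powr 0.6 * T + 3 * real n * exp (- (L\<^sup>2)))"
proof -
  define J where "J = {j. 1 \<le> j \<and> real j < L\<^sup>2}"
  define X where "X = (real M + 1) * real n powr 0.6 * T + 3 * real n * exp (- (L\<^sup>2))"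
  have JM: "J \<subseteq> {..< nat \<lceil>L\<^sup>2\<rceil>}"
  proof
    fix x assume "x \<in> J"
    hence "real_of_int (int x) < L\<^sup>2" unfolding J_def by simp
    hence "int x < \<lceil>L\<^sup>2\<rceil>" by (simp only: less_ceiling_iff)
    thus "x \<in> {..< nat \<lceil>L\<^sup>2\<rceil>}" by simp
  qed
  have finJ: "finite J" using JM finite_subset by blast
  have cardJ: "real (card J) \<le> L\<^sup>2 + 1"
  proof -
    have "card J \<le> nat \<lceil>L\<^sup>2\<rceil>" using card_mono[OF _ JM] by simp
    hence "real (card J) \<le> real (nat \<lceil>L\<^sup>2\<rceil>)" by (simp only: of_nat_le_iff)
    also have "\<dots> \<le> L\<^sup>2 + 1" by (simp add: of_nat_nat)
    finally show ?thesis .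
  qed
  have X0: "0 \<le> X" unfolding X_def using Tpos by (intro add_nonneg_nonneg mult_nonneg_nonneg) auto
  have sumA: "(\<Sum>j\<in>J. real (card (A j))) \<le> real n"
  proof -
    define B where "B = {a\<in>D. c a \<in> J}"
    have finB: "finite B" unfolding B_def using finD by simp
    have "(\<Sum>j\<in>J. real (card (A j))) = (\<Sum>j\<in>J. \<Sum>a\<in>{a. a \<in> B \<and> c a = j}. 1)"
    proof (intro sum.cong refl)
      fix j assume "j \<in> J"
      hence "{a. a \<in> B \<and> c a = j} = A j" unfolding A_def B_def by auto
      thus "real (card (A j)) = (\<Sum>a\<in>{a. a \<in> B \<and> c a = j}. 1)" by simp
    qed
    also have "\<dots> = (\<Sum>a\<in>B. 1)" by (rule sum.group[OF finB finJ]) (auto simp: B_def)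
    also have "\<dots> = real (card B)" by simp
    also have "card B \<le> card (set S)"
    proof (rule card_mono)
      show "B \<subseteq> set S"
      proof
        fix a assume "a \<in> B"
        hence "c a \<ge> 1" unfolding B_def J_def by auto
        thus "a \<in> set S" unfolding c_def by (metis count_mset_0_iff not_one_le_zero)
      qed
    qed simp
    hence "real (card B) \<le> real n" using card_length[of S] len by linarith
    finally show ?thesis .
  qed
  have sumW: "(\<Sum>j\<in>J. W j) \<le> real n"
  proof -
    have "(\<Sum>j\<in>J. W j) = (\<Sum>a\<in>D. \<Sum>j\<in>J. poi (real n * p a) j)" unfolding W_def by (rule sum.swap)
    also have "\<dots> \<le> (\<Sum>a\<in>D. real n * p a)"
      using finJ ppos npos by (intro sum_mono poi_sum_le) (auto simp: J_def intro: less_imp_le)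
    also have "\<dots> = real n" using psum by (simp add: sum_distrib_left[symmetric])
    finally show ?thesis .
  qed
  have "(\<Sum>j\<in>J. \<bar>sigma_j (S_j D p S j) (mS j) - dev j n (hist D p) (m j)\<bar>)
      \<le> (\<Sum>j\<in>J. E j + real n * exp (- (L\<^sup>2)))"
    using pw ms by (intro sum_mono perj) (auto simp: J_def L_def)
  also have "\<dots> = (\<Sum>j\<in>J. X + w * (real (card (A j)) + W j))"
    unfolding E_def X_def by (intro sum.cong refl) (simp add: algebra_simps)
  also have "\<dots> = real (card J) * X + w * ((\<Sum>j\<in>J. real (card (A j))) + (\<Sum>j\<in>J. W j))"
    by (simp add: sum.distrib sum_distrib_left[symmetric])
  also have "\<dots> \<le> (L\<^sup>2 + 1) * X + w * (real n + real n)"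
    using cardJ X0 sumA sumW wpos
    by (intro add_mono mult_right_mono mult_left_mono) auto
  also have "w * (real n + real n) = 2 / L\<^sup>2" unfolding w_def using npos L1 by (simp add: field_simps)
  finally show ?thesis unfolding J_def X_def L_def by simp
qed

end

lemma asy1: "eventually (\<lambda>n::nat. (ln (real n)^2 + 1) * ((4*ln (real n)^4+2) * real n powr 0.6 * ((4*ln (real n)^4+2) / (real n * ln (real n)^2)) + 3 * real n * exp (-(ln (real n)^2))) \<le> 1 / ln (real n)^2) sequentially"
  by real_asymp

lemma asy2: "eventually (\<lambda>n::nat. (4*ln (real n)^4+2) / (real n * ln (real n)^2) \<le> 1) sequentially"
  by real_asymp

theorem lemma3:
  shows "\<exists>C N. \<forall>n\<ge>N. \<forall>(D::nat set) p S m mS.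
    is_distribution D p \<longrightarrow> length S = n \<longrightarrow> set S \<subseteq> D \<longrightarrow> faithful D p n S \<longrightarrow>
    (\<forall>j. 1 \<le> j \<and> real j < (ln (real n))\<^sup>2 \<longrightarrow> pw_median (hist D p) j n (m j)) \<longrightarrow>
    (\<forall>j. 1 \<le> j \<and> real j < (ln (real n))\<^sup>2 \<longrightarrow> ms_median (S_j D p S j) (mS j)) \<longrightarrow>
    (\<Sum>j\<in>{j. 1 \<le> j \<and> real j < (ln (real n))\<^sup>2}.
        \<bar>sigma_j (S_j D p S j) (mS j) - dev j n (hist D p) (m j)\<bar>) \<le> C / (ln (real n))\<^sup>2"
proof -
  have "eventually (\<lambda>n::nat. n \<ge> 3) sequentially" by (rule eventually_ge_at_top)
  from eventually_conj[OF this eventually_conj[OF asy1 asy2]]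
  obtain N where N: "\<And>n. n \<ge> N \<Longrightarrow> n \<ge> 3 \<and> (ln (real n)^2 + 1) * ((4*ln (real n)^4+2) * real n powr 0.6 * ((4*ln (real n)^4+2) / (real n * ln (real n)^2)) + 3 * real n * exp (-(ln (real n)^2))) \<le> 1 / ln (real n)^2
      \<and> (4*ln (real n)^4+2) / (real n * ln (real n)^2) \<le> 1"
    unfolding eventually_sequentially by blast
  show ?thesis
  proof (intro exI allI impI)
    fix n D p S m mS
    assume nN: "N \<le> n" and a1: "is_distribution D p" and a2: "length S = n" and a3: "set S \<subseteq> D"
      and a4: "faithful D p n S"
      and pw: "\<forall>j. 1 \<le> j \<and> real j < (ln (real n))\<^sup>2 \<longrightarrow> pw_median (hist D p) j n (m j)"
      and ms: "\<forall>j. 1 \<le> j \<and> real j < (ln (real n))\<^sup>2 \<longrightarrow> ms_median (S_j D p S j) (mS j)"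
    have n3: "n \<ge> 3" and b1: "(ln (real n)^2 + 1) * ((4*ln (real n)^4+2) * real n powr 0.6 * ((4*ln (real n)^4+2) / (real n * ln (real n)^2)) + 3 * real n * exp (-(ln (real n)^2))) \<le> 1 / ln (real n)^2"
      and b2: "(4*ln (real n)^4+2) / (real n * ln (real n)^2) \<le> 1" using N[OF nN] by auto
    interpret fx n D p S using n3 a1 a2 a3 a4 b2 by unfold_locales auto
    have tot: "(\<Sum>j\<in>{j. 1 \<le> j \<and> real j < (ln (real n))\<^sup>2}.
        \<bar>sigma_j (S_j D p S j) (mS j) - dev j n (hist D p) (m j)\<bar>)
      \<le> 2 / L\<^sup>2 + (L\<^sup>2 + 1) * ((real M + 1) * real n powr 0.6 * T + 3 * real n * exp (- (L\<^sup>2)))"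
      by (rule total[OF pw ms])
    have TU: "T \<le> (4*L^4+2) / (real n * L^2)" using T_upper unfolding w_def by simp
    have MU: "real M + 1 \<le> 4*L^4+2" using M_bounds by simp
    have "(real M + 1) * real n powr 0.6 * T \<le> (4*L^4+2) * real n powr 0.6 * ((4*L^4+2) / (real n * L^2))"
      using TU MU Tpos by (intro mult_mono) auto
    hence "(L\<^sup>2 + 1) * ((real M + 1) * real n powr 0.6 * T + 3 * real n * exp (- (L\<^sup>2)))
        \<le> (L\<^sup>2 + 1) * ((4*L^4+2) * real n powr 0.6 * ((4*L^4+2) / (real n * L^2)) + 3 * real n * exp (- (L\<^sup>2)))"
      by (intro mult_left_mono) auto
    also have "\<dots> \<le> 1 / L\<^sup>2" using b1 unfolding L_def .
    finally have "(\<Sum>j\<in>{j. 1 \<le> j \<and> real j < (ln (real n))\<^sup>2}.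
        \<bar>sigma_j (S_j D p S j) (mS j) - dev j n (hist D p) (m j)\<bar>) \<le> 2 / L\<^sup>2 + 1 / L\<^sup>2"
      using tot by linarith
    thus "(\<Sum>j\<in>{j. 1 \<le> j \<and> real j < (ln (real n))\<^sup>2}.
        \<bar>sigma_j (S_j D p S j) (mS j) - dev j n (hist D p) (m j)\<bar>) \<le> 3 / (ln (real n))\<^sup>2"
      unfolding L_def by simp
  qed
qed

end
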